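(* For every integer $d\ge 4$ there exists a real solvable Lie algebra $\mathfrak{g}$ of dimension $d$ together with subalgebras $\mathfrak{g}_1,\mathfrak{g}_2$ of $\mathfrak{g}$ such that $\mathfrak{g}\cong\mathfrak{g}_1\underline{\times}\mathfrak{g}_2$.
   Context: All Lie algebras are finite-dimensional over $\mathbb{R}$; $b_1(\mathfrak{g})=\dim\mathfrak{g}/[\mathfrak{g},\mathfrak{g}]$. Product by generators: given Lie algebras $\mathfrak{g}_1,\mathfrak{g}_2$ with $m_i=b_1(\mathfrak{g}_i)$, choose linear forms $\omega_1,\dots,\omega_{m_1}$ on $\mathfrak{g}_1$ vanishing on $[\mathfrak{g}_1,\mathfrak{g}_1]$ and inducing a basis of $(\mathfrak{g}_1/[\mathfrak{g}_1,\mathfrak{g}_1])^*$, and similarly $\omega'_1,\dots,\omega'_{m_2}$ for $\mathfrak{g}_2$. Then $\mathfrak{g}_1\underline{\times}\mathfrak{g}_2$ is the Lie algebra with underlying space $\mathfrak{g}_1\oplus\mathfrak{g}_2\oplus\mathbb{R}^{m_1m_2}$ (basis $Z_{ij}$, $1\le i\le m_1$, $1\le j\le m_2$, of the last summand), whose bracket restricts to the given brackets on $\mathfrak{g}_1$ and on $\mathfrak{g}_2$, the $Z_{ij}$ are central, and $[x,y]=\sum_{i,j}\omega_i(x)\omega'_j(y)Z_{ij}$ for $x\in\mathfrak{g}_1$, $y\in\mathfrak{g}_2$. Equivalently, it is the central extension of $\mathfrak{g}_1\oplus\mathfrak{g}_2$ obtained by adding Maurer–Cartan forms $\eta_{ij}$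 with $d\eta_{ij}=\omega_i\wedge\omega'_j$; its dimension is $\dim\mathfrak{g}_1+\dim\mathfrak{g}_2+m_1m_2$. *)

theory Defs
  imports "HOL-Analysis.Analysis" "HOL-Analysis.Finite_Function_Topology"
begin

text \<open>Finite-dimensional real Lie algebras, realised as a subspace V of a real
vector space together with a bracket br (only its values on V matter).\<close>

definition fin_dim :: "'a::real_vector set \<Rightarrow> bool" where
  "fin_dim V \<longleftrightarrow> (\<exists>B. finite B \<and> B \<subseteq> V \<and> V = span B)"

definition lie_algebra :: "'a::real_vector set \<Rightarrow> ('a \<Rightarrow> 'a \<Rightarrow> 'a) \<Rightarrow> bool" where
  "lie_algebra V br \<longleftrightarrow> subspace V \<and> fin_dim V \<and>
     (\<forall>x\<in>V. \<forall>y\<in>V. br x y \<in> V) \<and>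
     (\<forall>x\<in>V. \<forall>y\<in>V. \<forall>z\<in>V. br (x + y) z = br x z + br y z) \<and>
     (\<forall>x\<in>V. \<forall>y\<in>V. \<forall>z\<in>V. br x (y + z) = br x y + br x z) \<and>
     (\<forall>a. \<forall>x\<in>V. \<forall>y\<in>V. br (a *\<^sub>R x) y = a *\<^sub>R br x y) \<and>
     (\<forall>a. \<forall>x\<in>V. \<forall>y\<in>V. br x (a *\<^sub>R y) = a *\<^sub>R br x y) \<and>
     (\<forall>x\<in>V. br x x = 0) \<and>
     (\<forall>x\<in>V. \<forall>y\<in>V. \<forall>z\<in>V. br x (br y z) + br y (br z x) + br z (br x y) = 0)"

definition derived :: "'a::real_vector set \<Rightarrow> ('a \<Rightarrow> 'a \<Rightarrow> 'a) \<Rightarrow> 'a set" where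
  "derived V br = span {br x y | x y. x \<in> V \<and> y \<in> V}"

fun derived_series :: "'a::real_vector set \<Rightarrow> ('a \<Rightarrow> 'a \<Rightarrow> 'a) \<Rightarrow> nat \<Rightarrow> 'a set" where
  "derived_series V br 0 = V"
| "derived_series V br (Suc k) = derived (derived_series V br k) br"

definition solvable_lie :: "'a::real_vector set \<Rightarrow> ('a \<Rightarrow> 'a \<Rightarrow> 'a) \<Rightarrow> bool" where
  "solvable_lie V br \<longleftrightarrow> (\<exists>k. derived_series V br k = {0})"

definition lie_subalgebra :: "'a::real_vector set \<Rightarrow> 'a set \<Rightarrow> ('a \<Rightarrow> 'a \<Rightarrow> 'a) \<Rightarrow> bool" where
  "lie_subalgebra W V br \<longleftrightarrow> subspace W \<and> W \<subseteq> V \<and> (\<forall>x\<in>W. \<forall>y\<in>W. br x y \<in> W)"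

definition betti1 :: "'a::real_vector set \<Rightarrow> ('a \<Rightarrow> 'a \<Rightarrow> 'a) \<Rightarrow> nat" where
  "betti1 V br = dim V - dim (derived V br)"

definition linear_on :: "'a::real_vector set \<Rightarrow> ('a \<Rightarrow> 'b::real_vector) \<Rightarrow> bool" where
  "linear_on V f \<longleftrightarrow> (\<forall>x\<in>V. \<forall>y\<in>V. f (x + y) = f x + f y) \<and>
                    (\<forall>a. \<forall>x\<in>V. f (a *\<^sub>R x) = a *\<^sub>R f x)"

text \<open>omega 0, ..., omega (b1-1): linear forms on V vanishing on [V,V] that are linearly
  independent on V, i.e. that induce a basis of the dual of V/[V,V].\<close>
definition generator_forms :: "'a::real_vector set \<Rightarrow> ('a \<Rightarrow> 'a \<Rightarrow> 'a) \<Rightarrow> (nat \<Rightarrow> 'a \<Rightarrow> real) \<Rightarrow> bool" where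
  "generator_forms V br \<omega> \<longleftrightarrow>
     (\<forall>i < betti1 V br. linear_on V (\<omega> i) \<and> (\<forall>x\<in>V. \<forall>y\<in>V. \<omega> i (br x y) = 0)) \<and>
     (\<forall>c::nat \<Rightarrow> real. (\<forall>x\<in>V. (\<Sum>i<betti1 V br. c i * \<omega> i x) = 0) \<longrightarrow>
        (\<forall>i < betti1 V br. c i = 0))"

text \<open>Product by generators: underlying space V1 (+) V2 (+) R^(m1*m2), the last summand
  realised as finitely supported functions on pairs (i,j), i<m1, j<m2.\<close>
definition gp_Z :: "(nat \<Rightarrow> 'a \<Rightarrow> real) \<Rightarrow> (nat \<Rightarrow> 'b \<Rightarrow> real) \<Rightarrow> nat \<Rightarrow> nat \<Rightarrow> 'a \<Rightarrow> 'b
     \<Rightarrow> (nat \<times> nat, real) poly_mapping" where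
  "gp_Z \<omega> \<omega>' m1 m2 x y =
     (\<Sum>i<m1. \<Sum>j<m2. (\<omega> i x * \<omega>' j y) *\<^sub>R Poly_Mapping.single (i, j) (1::real))"

definition gen_prod_carrier :: "'a::real_vector set \<Rightarrow> 'b::real_vector set \<Rightarrow> nat \<Rightarrow> nat
     \<Rightarrow> ('a \<times> 'b \<times> ((nat \<times> nat, real) poly_mapping)) set" where
  "gen_prod_carrier V1 V2 m1 m2 =
     {(x, y, z). x \<in> V1 \<and> y \<in> V2 \<and> Poly_Mapping.keys z \<subseteq> {..<m1} \<times> {..<m2}}"

definition gen_prod_bracket :: "('a::real_vector \<Rightarrow> 'a \<Rightarrow> 'a) \<Rightarrow> ('b::real_vector \<Rightarrow> 'b \<Rightarrow> 'b)
     \<Rightarrow> (nat \<Rightarrow> 'a \<Rightarrow> real) \<Rightarrow> (nat \<Rightarrow> 'b \<Rightarrow> real) \<Rightarrow> nat \<Rightarrow> nat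
     \<Rightarrow> ('a \<times> 'b \<times> ((nat \<times> nat, real) poly_mapping)) \<Rightarrow> ('a \<times> 'b \<times> ((nat \<times> nat, real) poly_mapping))
     \<Rightarrow> ('a \<times> 'b \<times> ((nat \<times> nat, real) poly_mapping))" where
  "gen_prod_bracket br1 br2 \<omega> \<omega>' m1 m2 =
     (\<lambda>(x, y, z) (x', y', z'). (br1 x x', br2 y y',
        gp_Z \<omega> \<omega>' m1 m2 x y' - gp_Z \<omega> \<omega>' m1 m2 x' y))"

definition lie_iso :: "'a::real_vector set \<Rightarrow> ('a \<Rightarrow> 'a \<Rightarrow> 'a) \<Rightarrow> 'b::real_vector set
     \<Rightarrow> ('b \<Rightarrow> 'b \<Rightarrow> 'b) \<Rightarrow> bool" where
  "lie_iso V br V' br' \<longleftrightarrow> (\<exists>f. linear_on V f \<and> bij_betw f V V' \<and>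
      (\<forall>x\<in>V. \<forall>y\<in>V. f (br x y) = br' (f x) (f y)))"

end

theory Submission
  imports Defs
begin

abbreviation L :: "(nat, real) poly_mapping \<Rightarrow> nat \<Rightarrow> real" where
  "L p k \<equiv> Poly_Mapping.lookup p k"

lemma lookup_scaleR [simp]: "Poly_Mapping.lookup (r *\<^sub>R p) k = r * Poly_Mapping.lookup p k"
proof -
  have "finite {i. r * Poly_Mapping.lookup p i \<noteq> 0}"
    by (rule finite_subset[OF _ finite_lookup[of p]]) auto
  then show ?thesis by (simp add: scaleR_poly_mapping_def)
qed

lemma lookup_add' [simp]: "Poly_Mapping.lookup (p + q) k = Poly_Mapping.lookup p k + (Poly_Mapping.lookup q k::real)"
  by (simp add: lookup_add)

lemma lookup_diff' [simp]: "Poly_Mapping.lookup (p - q) k = Poly_Mapping.lookup p k - (Poly_Mapping.lookup q k::real)"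
  by (simp add: lookup_minus)

lemma sum_delta_mult [simp]: "finite K \<Longrightarrow> (\<Sum>x\<in>K. f x * (if x = i then 1 else 0)) = (if i \<in> K then (f i::real) else 0)"
  by (simp add: if_distrib[of "\<lambda>y. f _ * y"] sum.delta' cong: if_cong)

lemma sum_delta_mult' [simp]: "finite K \<Longrightarrow> (\<Sum>x\<in>K. f x * (if i = x then 1 else 0)) = (if i \<in> K then (f i::real) else 0)"
  by (simp add: if_distrib[of "\<lambda>y. f _ * y"] sum.delta cong: if_cong)

definition SK :: "nat set \<Rightarrow> (nat, real) poly_mapping set" where
  "SK K = {p. \<forall>k. k \<notin> K \<longrightarrow> L p k = 0}"

lemma subspace_SK: "subspace (SK K)"
  unfolding subspace_def SK_def by auto

lemma single_scale: "Poly_Mapping.single k a = a *\<^sub>R Poly_Mapping.single k (1::real)"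
  by (rule poly_mapping_eqI) (simp add: lookup_single when_def)

lemma SK_span: assumes "finite K"
  shows "SK K = span ((\<lambda>k. Poly_Mapping.single k (1::real)) ` K)"
proof (rule span_subspace[symmetric])
  show "(\<lambda>k. Poly_Mapping.single k 1) ` K \<subseteq> SK K"
    by (auto simp: SK_def lookup_single when_def)
  show "subspace (SK K)" by (rule subspace_SK)
  show "SK K \<subseteq> span ((\<lambda>k. Poly_Mapping.single k 1) ` K)"
  proof
    fix p assume p: "p \<in> SK K"
    have "p = (\<Sum>k\<in>K. L p k *\<^sub>R Poly_Mapping.single k 1)"
    proof (rule poly_mapping_eqI)
      fix i
      show "L p i = L (\<Sum>k\<in>K. L p k *\<^sub>R Poly_Mapping.single k 1) i"
        using p assms by (auto simp: lookup_sum lookup_single when_def SK_def)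
    qed
    also have "\<dots> \<in> span ((\<lambda>k. Poly_Mapping.single k 1) ` K)"
      by (intro span_sum span_scale span_base) auto
    finally show "p \<in> span ((\<lambda>k. Poly_Mapping.single k 1) ` K)" .
  qed
qed

lemma indep_singles: assumes "finite (K::nat set)"
  shows "independent ((\<lambda>k. Poly_Mapping.single k (1::real)) ` K)"
proof
  assume "dependent ((\<lambda>k. Poly_Mapping.single k (1::real)) ` K)"
  then obtain u where u: "\<exists>v\<in>(\<lambda>k. Poly_Mapping.single k (1::real)) ` K. u v \<noteq> 0"
    and s: "(\<Sum>v\<in>(\<lambda>k. Poly_Mapping.single k (1::real)) ` K. u v *\<^sub>R v) = 0"
    using dependent_finite[of "(\<lambda>k. Poly_Mapping.single k (1::real)) ` K"] assms by auto
  obtain k where k: "k \<in> K" "u (Poly_Mapping.single k 1) \<noteq> 0" using u by auto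
  have inj: "inj_on (\<lambda>k. Poly_Mapping.single k (1::real)) K"
    by (rule inj_onI) (metis lookup_single_eq lookup_single_not_eq one_neq_zero)
  have "0 = L (\<Sum>v\<in>(\<lambda>k. Poly_Mapping.single k (1::real)) ` K. u v *\<^sub>R v) k"
    using s by simp
  also have "\<dots> = (\<Sum>j\<in>K. u (Poly_Mapping.single j (1::real)) * (if j = k then 1 else 0))"
    by (simp add: lookup_sum sum.reindex[OF inj] lookup_single when_def)
  also have "\<dots> = u (Poly_Mapping.single k 1)"
    using k assms by (simp add: when_def)
  finally show False using k by simp
qed

lemma dim_SK: assumes "finite K" shows "dim (SK K) = card K"
proof -
  have inj: "inj_on (\<lambda>k. Poly_Mapping.single k (1::real)) K"
    by (rule inj_onI) (metis lookup_single_eq lookup_single_not_eq one_neq_zero)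
  show ?thesis
    using dim_span_eq_card_independent[OF indep_singles[OF assms]] SK_span[OF assms]
      card_image[OF inj] by simp
qed

lemma fin_dim_SK: assumes "finite K" shows "fin_dim (SK K)"
  unfolding fin_dim_def using SK_span[OF assms] span_superset assms
  by (metis finite_imageI)


definition brf :: "nat \<Rightarrow> nat \<Rightarrow> (nat, real) poly_mapping \<Rightarrow> (nat, real) poly_mapping \<Rightarrow> nat \<Rightarrow> real" where
  "brf n cn p q k = (if k = n then real cn * (L p (n-1) * L q n - L p n * L q (n-1)) else 0)
     + (if n < k \<and> k \<le> 2*n - cn then L p 0 * L q (k-n) - L q 0 * L p (k-n) else 0)"

definition brc :: "nat \<Rightarrow> nat \<Rightarrow> (nat, real) poly_mapping \<Rightarrow> (nat, real) poly_mapping \<Rightarrow> (nat, real) poly_mapping" where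
  "brc n cn p q = Abs_poly_mapping (brf n cn p q)"

lemma lookup_brc: "L (brc n cn p q) k = brf n cn p q k"
proof -
  have "finite {k. brf n cn p q k \<noteq> 0}"
    by (rule finite_subset[of _ "{..2*n}"]) (auto simp: brf_def split: if_splits)
  then show ?thesis by (simp add: brc_def)
qed

lemma brc_SK: "n \<ge> 1 \<Longrightarrow> cn \<le> 1 \<Longrightarrow> brc n cn p q \<in> SK {..<2*n+1-cn}"
  by (auto simp: SK_def lookup_brc brf_def)

lemma lie_brc: assumes "n \<ge> 2" "cn \<le> 1"
  shows "lie_algebra (SK {..<2*n+1-cn}) (brc n cn)"
  unfolding lie_algebra_def
proof (intro conjI ballI allI)
  show "subspace (SK {..<2*n+1-cn})" by (rule subspace_SK)
  show "fin_dim (SK {..<2*n+1-cn})" by (rule fin_dim_SK) simp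
  fix x y assume "x \<in> SK {..<2*n+1-cn}" "y \<in> SK {..<2*n+1-cn}"
  show "brc n cn x y \<in> SK {..<2*n+1-cn}" using brc_SK assms by simp
next
  fix x y z
  show "brc n cn (x + y) z = brc n cn x z + brc n cn y z"
    by (rule poly_mapping_eqI) (simp add: lookup_brc brf_def algebra_simps)
  show "brc n cn x (y + z) = brc n cn x y + brc n cn x z"
    by (rule poly_mapping_eqI) (simp add: lookup_brc brf_def algebra_simps)
  show "brc n cn x (brc n cn y z) + brc n cn y (brc n cn z x) + brc n cn z (brc n cn x y) = 0"
  proof (rule poly_mapping_eqI)
    fix k
    consider "cn = 0" | "cn = 1" using assms by linarith
    then show "L (brc n cn x (brc n cn y z) + brc n cn y (brc n cn z x) + brc n cn z (brc n cn x y)) k = L 0 k"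
      by cases (use assms in \<open>auto simp: lookup_brc brf_def algebra_simps\<close>)
  qed
next
  fix a x y
  show "brc n cn (a *\<^sub>R x) y = a *\<^sub>R brc n cn x y"
    by (rule poly_mapping_eqI) (simp add: lookup_brc brf_def algebra_simps)
  show "brc n cn x (a *\<^sub>R y) = a *\<^sub>R brc n cn x y"
    by (rule poly_mapping_eqI) (simp add: lookup_brc brf_def algebra_simps)
next
  fix x
  show "brc n cn x x = 0"
    by (rule poly_mapping_eqI) (simp add: lookup_brc brf_def algebra_simps)
qed


lemma lookup_sum_single: "finite K \<Longrightarrow>
  Poly_Mapping.lookup (\<Sum>k\<in>K. Poly_Mapping.single k (g k)) i = (if i \<in> K then (g i :: real) else 0)"
  by (simp add: lookup_sum lookup_single when_def sum.delta)

lemma lookup_gpZ: "Poly_Mapping.lookup (gp_Z \<omega> \<omega>' m1 m2 x y) (a, b) =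
   (if a < m1 \<and> b < m2 then \<omega> a x * \<omega>' b y else 0)"
proof -
  have e: "\<And>P Q (C::real). (if P \<and> Q then C else 0) = (if Q then (if P then C else 0) else 0)" by simp
  show ?thesis
    by (cases "b < m2"; simp add: gp_Z_def lookup_sum lookup_single when_def e sum.delta if_distrib[of "\<lambda>t. _ * t"] cong: if_cong)
qed

lemma brc_zero_T: "L x 0 = 0 \<Longrightarrow> L x (n-1) = 0 \<Longrightarrow> L y 0 = 0 \<Longrightarrow> L y (n-1) = 0 \<Longrightarrow> brc n cn x y = 0"
  by (rule poly_mapping_eqI) (simp add: lookup_brc brf_def)

lemma span_sub0: "S \<subseteq> {0} \<Longrightarrow> span S = {0}"
  by (metis span_empty span_insert_0 subset_singletonD)

lemma solv_brc: assumes "n \<ge> 2"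
  shows "solvable_lie (SK {..<2*n+1-cn}) (brc n cn)"
proof -
  let ?T = "{p. L p 0 = 0 \<and> L p (n-1) = 0}"
  have sT: "subspace ?T" unfolding subspace_def by auto
  have "derived (SK {..<2*n+1-cn}) (brc n cn) \<subseteq> ?T"
    unfolding derived_def
    by (rule span_minimal[OF _ sT]) (use assms in \<open>auto simp: lookup_brc brf_def\<close>)
  then have "derived (derived (SK {..<2*n+1-cn}) (brc n cn)) (brc n cn) = {0}"
    unfolding derived_def[of "derived _ _"]
    by (intro span_sub0) (auto intro!: brc_zero_T)
  then show ?thesis unfolding solvable_lie_def
    by (intro exI[of _ 2]) (simp add: numeral_2_eq_2)
qed


lemma SK_mem: "p \<in> SK K \<Longrightarrow> k \<notin> K \<Longrightarrow> L p k = 0"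
  by (simp add: SK_def)

lemma single_SK: "k \<in> K \<Longrightarrow> Poly_Mapping.single k a \<in> SK K"
  by (simp add: SK_def lookup_single when_def)

lemma SK_mono: "A \<subseteq> B \<Longrightarrow> SK A \<subseteq> SK B"
  by (auto simp: SK_def)

lemma SK_empty: "SK {} = {0}"
  by (auto simp: SK_def intro: poly_mapping_eqI)

lemma sub1: assumes "n \<ge> 2" "cn \<le> 1"
  shows "lie_subalgebra (SK {0}) (SK {..<2*n+1-cn}) (brc n cn)"
  unfolding lie_subalgebra_def
proof (intro conjI ballI)
  show "subspace (SK {0})" by (rule subspace_SK)
  show "SK {0} \<subseteq> SK {..<2*n+1-cn}" using assms by (auto simp: SK_def)
  fix x y assume "x \<in> SK {0}" "y \<in> SK {0}"
  then show "brc n cn x y \<in> SK {0}" using assms by (auto simp: SK_def lookup_brc brf_def)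
qed

lemma sub2: assumes "n \<ge> 2" "cn \<le> 1"
  shows "lie_subalgebra (SK {1..n}) (SK {..<2*n+1-cn}) (brc n cn)"
  unfolding lie_subalgebra_def
proof (intro conjI ballI)
  show "subspace (SK {1..n})" by (rule subspace_SK)
  show "SK {1..n} \<subseteq> SK {..<2*n+1-cn}" using assms by (intro SK_mono) auto
  fix x y assume "x \<in> SK {1..n}" "y \<in> SK {1..n}"
  then show "brc n cn x y \<in> SK {1..n}" using assms by (auto simp: SK_def lookup_brc brf_def)
qed

lemma derived1: assumes "n \<ge> 2" shows "derived (SK {0}) (brc n cn) = SK {}"
  unfolding derived_def SK_empty
  by (rule span_sub0) (use assms in \<open>auto simp: SK_def lookup_brc brf_def intro!: poly_mapping_eqI\<close>)

lemma derived2: assumes "n \<ge> 2" "cn \<le> 1"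
  shows "derived (SK {1..n}) (brc n cn) = SK (if cn = 1 then {n} else {})"
proof (cases "cn = 1")
  case False
  then have c0: "cn = 0" using assms by simp
  have "derived (SK {1..n}) (brc n cn) = {0}" unfolding derived_def
    by (rule span_sub0) (use assms c0 in \<open>auto simp: SK_def intro!: poly_mapping_eqI simp: lookup_brc brf_def\<close>)
  then show ?thesis using c0 SK_empty by simp
next
  case True
  have "span {brc n cn x y |x y. x \<in> SK {1..n} \<and> y \<in> SK {1..n}} = SK {n}"
  proof (rule span_subspace)
    show "{brc n cn x y |x y. x \<in> SK {1..n} \<and> y \<in> SK {1..n}} \<subseteq> SK {n}"
      using assms by (auto simp: SK_def lookup_brc brf_def)
    show "subspace (SK {n})" by (rule subspace_SK)
    show "SK {n} \<subseteq> span {brc n cn x y |x y. x \<in> SK {1..n} \<and> y \<in> SK {1..n}}"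
    proof
      fix p assume p: "p \<in> SK {n}"
      have "p = brc n cn (Poly_Mapping.single (n-1) 1) (Poly_Mapping.single n (L p n))"
        by (rule poly_mapping_eqI)
           (use p assms True in \<open>auto simp: SK_def lookup_brc brf_def lookup_single when_def\<close>)
      moreover have "Poly_Mapping.single (n-1) 1 \<in> SK {1..n}" "Poly_Mapping.single n (L p n) \<in> SK {1..n}"
        using assms by (auto intro!: single_SK)
      ultimately show "p \<in> span {brc n cn x y |x y. x \<in> SK {1..n} \<and> y \<in> SK {1..n}}"
        by (intro span_base) blast
    qed
  qed
  then show ?thesis using True by (simp add: derived_def)
qed

lemma betti_1: assumes "n \<ge> 2" shows "betti1 (SK {0}) (brc n cn) = 1"
  unfolding betti1_def derived1[OF assms] by (simp add: dim_SK)

lemma betti_2: assumes "n \<ge> 2" "cn \<le> 1" shows "betti1 (SK {1..n}) (brc n cn) = n - cn"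
  unfolding betti1_def derived2[OF assms] using assms by (auto simp: dim_SK)

lemma gen1: assumes "n \<ge> 2"
  shows "generator_forms (SK {0}) (brc n cn) (\<lambda>i x. L x 0)"
  unfolding generator_forms_def betti_1[OF assms]
proof (intro conjI allI impI ballI)
  fix i :: nat
  show "linear_on (SK {0}) (\<lambda>x. L x 0)" by (simp add: linear_on_def)
  fix x y show "L (brc n cn x y) 0 = 0" using assms by (simp add: lookup_brc brf_def)
next
  fix c :: "nat \<Rightarrow> real" and i :: nat
  assume h: "\<forall>x\<in>SK {0}. (\<Sum>i<1. c i * L x 0) = 0" and "i < 1"
  then show "c i = 0" using h[rule_format, OF single_SK[of 0 "{0}" 1]] by simp
qed

lemma gen2: assumes "n \<ge> 2" "cn \<le> 1"
  shows "generator_forms (SK {1..n}) (brc n cn) (\<lambda>j y. L y (Suc j))"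
  unfolding generator_forms_def betti_2[OF assms]
proof (intro conjI allI impI ballI)
  fix i :: nat assume i: "i < n - cn"
  show "linear_on (SK {1..n}) (\<lambda>x. L x (Suc i))" by (simp add: linear_on_def)
  fix x y show "L (brc n cn x y) (Suc i) = 0" using assms i by (auto simp: lookup_brc brf_def)
next
  fix c :: "nat \<Rightarrow> real" and i :: nat
  assume h: "\<forall>x\<in>SK {1..n}. (\<Sum>i<n-cn. c i * L x (Suc i)) = 0" and i: "i < n - cn"
  have "Poly_Mapping.single (Suc i) 1 \<in> SK {1..n}" using i by (intro single_SK) auto
  from h[rule_format, OF this] show "c i = 0" using i
    by (simp add: lookup_single when_def sum.delta')
qed


lemma lookup_sum_pair: "Poly_Mapping.lookup (\<Sum>j<m. Poly_Mapping.single ((0::nat), j) (g j)) (a, b::nat) =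
   (if a = 0 \<and> b < m then (g b :: real) else 0)"
proof -
  have "Poly_Mapping.lookup (\<Sum>j<m. Poly_Mapping.single ((0::nat), j) (g j)) (a, b) =
     (\<Sum>j<m. if j = b then (if a = 0 then g j else 0) else 0)"
    unfolding lookup_sum by (rule sum.cong) (auto simp: lookup_single when_def)
  then show ?thesis unfolding sum.delta[OF finite_lessThan] by simp
qed

lemma lookup_sum_shift: "Poly_Mapping.lookup (\<Sum>j<m. Poly_Mapping.single ((s::nat) + j) (g j)) k =
   (if s \<le> k \<and> k < s + m then (g (k - s) :: real) else 0)"
proof -
  have "Poly_Mapping.lookup (\<Sum>j<m. Poly_Mapping.single (s + j) (g j)) k =
     (\<Sum>j<m. if j = k - s then (if s \<le> k then g j else 0) else 0)"
    unfolding lookup_sum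
  proof (rule sum.cong)
    fix j show "Poly_Mapping.lookup (Poly_Mapping.single (s + j) (g j)) k = (if j = k - s then (if s \<le> k then g j else 0) else 0)"
      by (cases "s + j = k") (auto simp: lookup_single when_def)
  qed simp
  then show ?thesis unfolding sum.delta[OF finite_lessThan] by auto
qed

definition fmap :: "nat \<Rightarrow> nat \<Rightarrow> (nat, real) poly_mapping \<Rightarrow>
    (nat, real) poly_mapping \<times> (nat, real) poly_mapping \<times> ((nat \<times> nat, real) poly_mapping)" where
  "fmap n cn p = (Poly_Mapping.single 0 (L p 0), (\<Sum>k\<in>{1..n}. Poly_Mapping.single k (L p k)),
      (\<Sum>j<n-cn. Poly_Mapping.single (0, j) (L p (n+1+j))))"

lemma iso: assumes n2: "n \<ge> 2" and c1: "cn \<le> 1"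
  shows "lie_iso (SK {..<2*n+1-cn}) (brc n cn)
     (gen_prod_carrier (SK {0}) (SK {1..n}) 1 (n-cn))
     (gen_prod_bracket (brc n cn) (brc n cn) (\<lambda>i x. L x 0) (\<lambda>j y. L y (Suc j)) 1 (n-cn))"
  unfolding lie_iso_def
proof (intro exI[of _ "fmap n cn"] conjI ballI allI)
  show "linear_on (SK {..<2*n+1-cn}) (fmap n cn)"
    unfolding linear_on_def fmap_def
    by (auto intro!: poly_mapping_eqI simp: lookup_sum_single lookup_sum_pair lookup_single when_def split: prod.splits)
next
  fix p q
  show "fmap n cn (brc n cn p q) =
    gen_prod_bracket (brc n cn) (brc n cn) (\<lambda>i x. L x 0) (\<lambda>j y. L y (Suc j)) 1 (n-cn) (fmap n cn p) (fmap n cn q)"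
    unfolding fmap_def gen_prod_bracket_def
    using n2 c1
    by (auto intro!: poly_mapping_eqI simp: lookup_sum_single lookup_sum_pair lookup_single when_def
        lookup_brc brf_def lookup_gpZ split: prod.splits)
next
  show "bij_betw (fmap n cn) (SK {..<2*n+1-cn}) (gen_prod_carrier (SK {0}) (SK {1..n}) 1 (n-cn))"
  proof (rule bij_betwI')
    fix p q assume p: "p \<in> SK {..<2*n+1-cn}" and q: "q \<in> SK {..<2*n+1-cn}"
    show "(fmap n cn p = fmap n cn q) = (p = q)"
    proof
      assume eq: "fmap n cn p = fmap n cn q"
      have h0: "L p 0 = L q 0" using arg_cong[OF eq, of "\<lambda>t. L (fst t) 0"] by (simp add: fmap_def)
      have h1: "L p k = L q k" if "k \<in> {1..n}" for k
        using arg_cong[OF eq, of "\<lambda>t. L (fst (snd t)) k"] that by (simp add: fmap_def lookup_sum_single)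
      have h2: "L p (n+1+j) = L q (n+1+j)" if "j < n - cn" for j
        using arg_cong[OF eq, of "\<lambda>t. Poly_Mapping.lookup (snd (snd t)) (0,j)"] that by (simp add: fmap_def lookup_sum_pair)
      show "p = q"
      proof (rule poly_mapping_eqI)
        fix k
        consider "k = 0" | "k \<in> {1..n}" | "n < k \<and> k < 2*n+1-cn" | "k \<ge> 2*n+1-cn" by fastforce
        then show "L p k = L q k"
        proof cases
          case 3
          then show ?thesis using h2[of "k - n - 1"] by auto
        next
          case 4
          then show ?thesis using SK_mem[OF p, of k] SK_mem[OF q, of k] by simp
        qed (use h0 h1 in auto)
      qed
    qed simp
  next
    fix p assume p: "p \<in> SK {..<2*n+1-cn}"
    show "fmap n cn p \<in> gen_prod_carrier (SK {0}) (SK {1..n}) 1 (n-cn)"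
      unfolding gen_prod_carrier_def fmap_def
      by (auto simp: SK_def lookup_single when_def lookup_sum_single in_keys_iff lookup_sum_pair split: if_splits)
  next
    fix t assume t: "t \<in> gen_prod_carrier (SK {0}) (SK {1..n}) 1 (n-cn)"
    then obtain x y z where txyz: "t = (x, y, z)" and x: "x \<in> SK {0}" and y: "y \<in> SK {1..n}"
      and z: "Poly_Mapping.keys z \<subseteq> {..<1} \<times> {..<n-cn}"
      unfolding gen_prod_carrier_def by auto
    have z': "Poly_Mapping.lookup z (a, b) = 0" if "\<not> (a = 0 \<and> b < n - cn)" for a b
      using z that by (auto simp: in_keys_iff)
    define p where "p = x + y + (\<Sum>j<n-cn. Poly_Mapping.single (Suc n + j) (Poly_Mapping.lookup z (0, j)))"
    have Lp: "L p k = L x k + L y k + (if Suc n \<le> k \<and> k < Suc n + (n - cn) then Poly_Mapping.lookup z (0, k - Suc n) else 0)" for k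
      unfolding p_def lookup_add' lookup_sum_shift by simp
    show "\<exists>p\<in>SK {..<2*n+1-cn}. t = fmap n cn p"
    proof (intro bexI[of _ p])
      show "p \<in> SK {..<2*n+1-cn}"
        unfolding SK_def using SK_mem[OF x] SK_mem[OF y] n2 c1 by (auto simp: Lp)
      have "x = Poly_Mapping.single 0 (L p 0)"
        by (rule poly_mapping_eqI) (use SK_mem[OF x] SK_mem[OF y] n2 in \<open>auto simp: Lp lookup_single when_def\<close>)
      moreover have "y = (\<Sum>k\<in>{1..n}. Poly_Mapping.single k (L p k))"
        by (rule poly_mapping_eqI) (use SK_mem[OF x] SK_mem[OF y] n2 in \<open>auto simp: Lp lookup_sum_single\<close>)
      moreover have "z = (\<Sum>j<n-cn. Poly_Mapping.single (0, j) (L p (n+1+j)))"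
      proof (rule poly_mapping_eqI)
        fix k :: "nat \<times> nat"
        obtain a b where k: "k = (a, b)" by (cases k)
        show "Poly_Mapping.lookup z k = Poly_Mapping.lookup (\<Sum>j<n-cn. Poly_Mapping.single (0, j) (L p (n+1+j))) k"
          using SK_mem[OF x, of "Suc (n+b)"] SK_mem[OF y, of "Suc (n+b)"] z'[of a b]
          by (auto simp: k lookup_sum_pair Lp)
      qed
      ultimately show "t = fmap n cn p" by (simp add: txyz fmap_def)
    qed
  qed
qed

theorem proposition2:
  fixes d :: nat
  assumes "d \<ge> 4"
  shows "\<exists>(V :: (nat, real) poly_mapping set) br V1 V2 \<omega> \<omega>'.
           lie_algebra V br \<and> dim V = d \<and> solvable_lie V br \<and>
           lie_subalgebra V1 V br \<and> lie_subalgebra V2 V br \<and> V1 \<noteq> {0} \<and> V2 \<noteq> {0} \<and>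
           generator_forms V1 br \<omega> \<and> generator_forms V2 br \<omega>' \<and>
           lie_iso V br
             (gen_prod_carrier V1 V2 (betti1 V1 br) (betti1 V2 br))
             (gen_prod_bracket br br \<omega> \<omega>' (betti1 V1 br) (betti1 V2 br))"
proof -
  define n where "n = d div 2"
  define cn where "cn = 1 - d mod 2"
  have n2: "n \<ge> 2" using assms unfolding n_def by linarith
  have c1: "cn \<le> 1" unfolding cn_def by simp
  have dm: "d = 2 * (d div 2) + d mod 2" by simp
  have "d mod 2 = 0 \<or> d mod 2 = 1" by linarith
  then have dd: "2*n+1-cn = d" unfolding n_def cn_def using dm by linarith
  have nz: "Poly_Mapping.single k (1::real) \<noteq> 0" for k :: nat
  proof
    assume "Poly_Mapping.single k (1::real) = 0"
    then have "Poly_Mapping.lookup (Poly_Mapping.single k (1::real)) k = 0" by simp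
    then show False by simp
  qed
  have s1: "Poly_Mapping.single 0 (1::real) \<in> SK {0}" by (rule single_SK) simp
  have ne1: "SK {0} \<noteq> {0}"
  proof
    assume "SK {0} = {0}"
    with s1 have "Poly_Mapping.single (0::nat) (1::real) = 0" by simp
    with nz show False by blast
  qed
  have s2: "Poly_Mapping.single 1 (1::real) \<in> SK {1..n}" by (rule single_SK) (use n2 in simp)
  have ne2: "SK {1..n} \<noteq> {0}"
  proof
    assume "SK {1..n} = {0}"
    with s2 have "Poly_Mapping.single (1::nat) (1::real) = 0" by simp
    with nz show False by blast
  qed
  have "lie_algebra (SK {..<2*n+1-cn}) (brc n cn) \<and> dim (SK {..<2*n+1-cn}) = d \<and> solvable_lie (SK {..<2*n+1-cn}) (brc n cn) \<and>
           lie_subalgebra (SK {0}) (SK {..<2*n+1-cn}) (brc n cn) \<and> lie_subalgebra (SK {1..n}) (SK {..<2*n+1-cn}) (brc n cn) \<and>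
           SK {0} \<noteq> {0} \<and> SK {1..n} \<noteq> {0} \<and>
           generator_forms (SK {0}) (brc n cn) (\<lambda>i x. L x 0) \<and> generator_forms (SK {1..n}) (brc n cn) (\<lambda>j y. L y (Suc j)) \<and>
           lie_iso (SK {..<2*n+1-cn}) (brc n cn)
             (gen_prod_carrier (SK {0}) (SK {1..n}) (betti1 (SK {0}) (brc n cn)) (betti1 (SK {1..n}) (brc n cn)))
             (gen_prod_bracket (brc n cn) (brc n cn) (\<lambda>i x. L x 0) (\<lambda>j y. L y (Suc j))
                (betti1 (SK {0}) (brc n cn)) (betti1 (SK {1..n}) (brc n cn)))"
    unfolding betti_1[OF n2] betti_2[OF n2 c1]
  proof (intro conjI)
    show "dim (SK {..<2*n+1-cn}) = d" using dim_SK[of "{..<2*n+1-cn}"] dd by simp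
  qed (rule lie_brc[OF n2 c1] solv_brc[OF n2] sub1[OF n2 c1] sub2[OF n2 c1]
      ne1 ne2 gen1[OF n2] gen2[OF n2 c1] iso[OF n2 c1])+
  then show ?thesis
    by (intro exI[of _ "SK {..<2*n+1-cn}"] exI[of _ "brc n cn"] exI[of _ "SK {0}"] exI[of _ "SK {1..n}"]
        exI[of _ "\<lambda>i x. L x 0"] exI[of _ "\<lambda>j y. L y (Suc j)"])
qed

end
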